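(* Consider the two equations \[ \text{(A)}\quad \partial_{tt}u-\partial_{xx}u=(\partial_t u)^2, \qquad \text{(B)}\quad \partial_{tt}u-\partial_{xx}u=(\partial_t u)^2-(\partial_x u)^2 , \] for $u=u(t,x)$ real-valued, $x\in\mathbb{R}$. For $T>0$, $x_0\in\mathbb{R}$ let $\Gamma(T,x_0):=\{(t,x)\in[0,T)\times\mathbb{R}: |x-x_0|\le T-t\}$. \begin{enumerate} \item For any $T>0$ and $x_0\in\mathbb{R}$, neither (A) nor (B) admits a smooth exact self-similar blow-up solution in $\Gamma(T,x_0)$, i.e. there is no non-constant $U\in C^\infty([-1,1])$ such that $u(t,x)=U\big(\frac{x-x_0}{T-t}\big)$ solves (A), respectively (B), in $\Gamma(T,x_0)$. \item For all $T>0$ and $\kappa,x_0\in\mathbb{R}$, the functions \[ u_{\alpha,\beta,\kappa,T,x_0}(t,x)=-\alpha\log\Big(1-\frac{t}{T}\Big)+U_{\alpha,\beta}\Big(\frac{x-x_0}{T-t}\Big)+\kappa \] are smooth solutions, well defined in $\Gamma(T,x_0)$, which blow up at time $T$, where: for (A), $(\alpha,\beta)\in(0,1]\times\{0,\infty\}$ and \[ U_{\alpha,0}(y)=-\alpha\ln(1-\sqrt{1-\alpha}\,y),\qquad U_{\alpha,\infty}(y)=-\alpha\ln(1+\sqrt{1-\alpha}\,y); \] for (B), $(\alpha,\beta)\in\mathbb{Z}_+\times\mathbb{R}_+$ (with $\mathbb{R}_+=(0,\infty)$) and \[ U_{\alpha,\beta}(y)=-\log\big((1+y)^\alpha+\beta(1-y)^\alpha\big)+\log(1+\beta).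 \] This gives a five-parameter family $(\alpha,\beta,\kappa,T,x_0)$ of smooth generalized self-similar blow-up solutions with logarithmic growth. \end{enumerate}
   Context: A (exact) self-similar solution is one of the form $u(t,x)=U(y)$ with $y=\frac{x-x_0}{T-t}$; the backward light cone $|x-x_0|\le T-t$ corresponds to $|y|\le 1$. *)

theory Defs
  imports "HOL-Analysis.Analysis"
begin

definition pt :: "(real \<Rightarrow> real \<Rightarrow> real) \<Rightarrow> real \<Rightarrow> real \<Rightarrow> real" where
  "pt u t x = deriv (\<lambda>s. u s x) t"

definition px :: "(real \<Rightarrow> real \<Rightarrow> real) \<Rightarrow> real \<Rightarrow> real \<Rightarrow> real" where
  "px u t x = deriv (\<lambda>y. u t y) x"

fun Ck_on :: "nat \<Rightarrow> (real \<times> real) set \<Rightarrow> (real \<Rightarrow> real \<Rightarrow> real) \<Rightarrow> bool" where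
  "Ck_on 0 S u = continuous_on S (\<lambda>(t, x). u t x)"
| "Ck_on (Suc k) S u =
     ((\<forall>z\<in>S. (\<lambda>(t, x). u t x) differentiable (at z)) \<and> Ck_on k S (pt u) \<and> Ck_on k S (px u))"

definition smooth2_on :: "(real \<times> real) set \<Rightarrow> (real \<Rightarrow> real \<Rightarrow> real) \<Rightarrow> bool" where
  "smooth2_on S u \<longleftrightarrow> (\<forall>k. Ck_on k S u)"

definition smooth_on_interval :: "real \<Rightarrow> real \<Rightarrow> (real \<Rightarrow> real) \<Rightarrow> bool" where
  "smooth_on_interval a b U \<longleftrightarrow>
     (\<exists>D :: nat \<Rightarrow> real \<Rightarrow> real. (\<forall>y\<in>{a..b}. D 0 y = U y) \<and>
        (\<forall>k. \<forall>y\<in>{a..b}. (D k has_real_derivative D (Suc k) y) (at y within {a..b})))"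

definition solves_A :: "(real \<times> real) set \<Rightarrow> (real \<Rightarrow> real \<Rightarrow> real) \<Rightarrow> bool" where
  "solves_A S u \<longleftrightarrow> Ck_on 2 S u \<and>
     (\<forall>(t, x)\<in>S. pt (pt u) t x - px (px u) t x = (pt u t x)^2)"

definition solves_B :: "(real \<times> real) set \<Rightarrow> (real \<Rightarrow> real \<Rightarrow> real) \<Rightarrow> bool" where
  "solves_B S u \<longleftrightarrow> Ck_on 2 S u \<and>
     (\<forall>(t, x)\<in>S. pt (pt u) t x - px (px u) t x = (pt u t x)^2 - (px u t x)^2)"

definition Gamma :: "real \<Rightarrow> real \<Rightarrow> (real \<times> real) set" where
  "Gamma T x0 = {(t, x). 0 \<le> t \<and> t < T \<and> \<bar>x - x0\<bar> \<le> T - t}"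

definition U_A0 :: "real \<Rightarrow> real \<Rightarrow> real" where
  "U_A0 \<alpha> y = - \<alpha> * ln (1 - sqrt (1 - \<alpha>) * y)"

definition U_Ainf :: "real \<Rightarrow> real \<Rightarrow> real" where
  "U_Ainf \<alpha> y = - \<alpha> * ln (1 + sqrt (1 - \<alpha>) * y)"

definition U_B :: "nat \<Rightarrow> real \<Rightarrow> real \<Rightarrow> real" where
  "U_B \<alpha> \<beta> y = - ln ((1 + y) ^ \<alpha> + \<beta> * (1 - y) ^ \<alpha>) + ln (1 + \<beta>)"

definition gss :: "real \<Rightarrow> (real \<Rightarrow> real) \<Rightarrow> real \<Rightarrow> real \<Rightarrow> real \<Rightarrow> real \<Rightarrow> real \<Rightarrow> real" where
  "gss \<alpha> U \<kappa> T x0 t x = - \<alpha> * ln (1 - t / T) + U ((x - x0) / (T - t)) + \<kappa>"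

end

theory Submission
  imports Defs
begin

inductive sm :: "(real \<times> real) set \<Rightarrow> (real \<Rightarrow> real \<Rightarrow> real) \<Rightarrow> bool" for N where
  sm_const: "sm N (\<lambda>t x. c)"
| sm_fst: "sm N (\<lambda>t x. t)"
| sm_snd: "sm N (\<lambda>t x. x)"
| sm_add: "sm N f \<Longrightarrow> sm N g \<Longrightarrow> sm N (\<lambda>t x. f t x + g t x)"
| sm_mult: "sm N f \<Longrightarrow> sm N g \<Longrightarrow> sm N (\<lambda>t x. f t x * g t x)"
| sm_comp: "sm N g \<Longrightarrow> (\<forall>z\<in>N. g (fst z) (snd z) \<in> Om) \<Longrightarrow>
     (\<forall>k. \<forall>y\<in>Om. (D k has_real_derivative D (Suc k) y) (at y)) \<Longrightarrow> sm N (\<lambda>t x. D 0 (g t x))"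

lemma sm_deriv:
  assumes "sm N f"
  shows "\<exists>f1 f2. sm N f1 \<and> sm N f2 \<and> (\<forall>z\<in>N. ((\<lambda>p. f (fst p) (snd p)) has_derivative
     (\<lambda>h. f1 (fst z) (snd z) * fst h + f2 (fst z) (snd z) * snd h)) (at z))"
  using assms
proof induction
  case (sm_const c)
  show ?case
    by (rule exI[of _ "\<lambda>t x. 0"], rule exI[of _ "\<lambda>t x. 0"])
       (auto intro: sm.intros)
next
  case sm_fst
  show ?case
    by (rule exI[of _ "\<lambda>t x. 1"], rule exI[of _ "\<lambda>t x. 0"])
       (auto intro!: sm.intros derivative_eq_intros)
next
  case sm_snd
  show ?case
    by (rule exI[of _ "\<lambda>t x. 0"], rule exI[of _ "\<lambda>t x. 1"])
       (auto intro!: sm.intros derivative_eq_intros)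
next
  case (sm_add f g)
  then obtain f1 f2 g1 g2 where f: "sm N f1" "sm N f2" "\<forall>z\<in>N. ((\<lambda>p. f (fst p) (snd p)) has_derivative
     (\<lambda>h. f1 (fst z) (snd z) * fst h + f2 (fst z) (snd z) * snd h)) (at z)"
    and g: "sm N g1" "sm N g2" "\<forall>z\<in>N. ((\<lambda>p. g (fst p) (snd p)) has_derivative
     (\<lambda>h. g1 (fst z) (snd z) * fst h + g2 (fst z) (snd z) * snd h)) (at z)" by blast
  show ?case
    apply (rule exI[of _ "\<lambda>t x. f1 t x + g1 t x"], rule exI[of _ "\<lambda>t x. f2 t x + g2 t x"])
    using f g by (auto intro!: sm.intros derivative_eq_intros simp: algebra_simps)
next
  case (sm_mult f g)
  then obtain f1 f2 g1 g2 where f: "sm N f1" "sm N f2" "\<forall>z\<in>N. ((\<lambda>p. f (fst p) (snd p)) has_derivative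
     (\<lambda>h. f1 (fst z) (snd z) * fst h + f2 (fst z) (snd z) * snd h)) (at z)"
    and g: "sm N g1" "sm N g2" "\<forall>z\<in>N. ((\<lambda>p. g (fst p) (snd p)) has_derivative
     (\<lambda>h. g1 (fst z) (snd z) * fst h + g2 (fst z) (snd z) * snd h)) (at z)" by blast
  show ?case
    apply (rule exI[of _ "\<lambda>t x. f t x * g1 t x + f1 t x * g t x"],
           rule exI[of _ "\<lambda>t x. f t x * g2 t x + f2 t x * g t x"])
    using f g sm_mult.hyps by (auto intro!: sm.intros derivative_eq_intros simp: algebra_simps)
next
  case (sm_comp g Om D)
  then obtain g1 g2 where g: "sm N g1" "sm N g2" "\<forall>z\<in>N. ((\<lambda>p. g (fst p) (snd p)) has_derivative
     (\<lambda>h. g1 (fst z) (snd z) * fst h + g2 (fst z) (snd z) * snd h)) (at z)" by blast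
  have D1: "sm N (\<lambda>t x. D (Suc 0) (g t x))"
    using sm.sm_comp[of N g Om "\<lambda>k. D (Suc k)"] sm_comp.hyps by auto
  show ?case
    apply (rule exI[of _ "\<lambda>t x. D (Suc 0) (g t x) * g1 t x"],
           rule exI[of _ "\<lambda>t x. D (Suc 0) (g t x) * g2 t x"])
  proof (intro conjI ballI)
    show "sm N (\<lambda>t x. D (Suc 0) (g t x) * g1 t x)" "sm N (\<lambda>t x. D (Suc 0) (g t x) * g2 t x)"
      using D1 g by (auto intro: sm.intros)
    fix z assume z: "z \<in> N"
    have "(D 0 has_derivative (*) (D (Suc 0) (g (fst z) (snd z)))) (at (g (fst z) (snd z)))"
      using sm_comp.hyps z by (auto intro!: has_field_derivative_imp_has_derivative)
    from has_derivative_compose[OF g(3)[rule_format, OF z] this]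
    show "((\<lambda>p. D 0 (g (fst p) (snd p))) has_derivative
         (\<lambda>h. D (Suc 0) (g (fst z) (snd z)) * g1 (fst z) (snd z) * fst h +
              D (Suc 0) (g (fst z) (snd z)) * g2 (fst z) (snd z) * snd h)) (at z)"
      by (simp add: algebra_simps)
  qed
qed

lemma pt_eq_cong:
  assumes "open N" "\<forall>z\<in>N. f (fst z) (snd z) = g (fst z) (snd z)" "(t, x) \<in> N"
  shows "pt f t x = pt g t x \<and> px f t x = px g t x"
proof -
  obtain e where e: "e > 0" "ball (t, x) e \<subseteq> N" using assms(1,3) open_contains_ball by blast
  have "\<forall>\<^sub>F s in nhds t. f s x = g s x"
    unfolding eventually_nhds_metric
  proof (intro exI[of _ e] conjI allI impI)
    fix s assume "dist s t < e"
    then have "(s, x) \<in> ball (t, x) e" by (simp add: dist_Pair_Pair dist_commute)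
    then show "f s x = g s x" using e(2) assms(2) by force
  qed (use e in auto)
  moreover have "\<forall>\<^sub>F y in nhds x. f t y = g t y"
    unfolding eventually_nhds_metric
  proof (intro exI[of _ e] conjI allI impI)
    fix s assume "dist s x < e"
    then have "(t, s) \<in> ball (t, x) e" by (simp add: dist_Pair_Pair dist_commute)
    then show "f t s = g t s" using e(2) assms(2) by force
  qed (use e in auto)
  ultimately show ?thesis unfolding pt_def px_def by (auto intro: deriv_cong_ev)
qed

lemma Ck_cong:
  assumes "open N" "\<forall>z\<in>N. f (fst z) (snd z) = g (fst z) (snd z)" "Ck_on k N f"
  shows "Ck_on k N g"
  using assms(2,3)
proof (induction k arbitrary: f g)
  case 0
  then show ?case
    by (auto intro: continuous_on_cong[THEN iffD1, rotated 2] simp: case_prod_beta')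
next
  case (Suc k)
  have "\<forall>z\<in>N. (\<lambda>(t, x). g t x) differentiable (at z)"
  proof
    fix z assume z: "z \<in> N"
    then obtain D where "((\<lambda>(t, x). f t x) has_derivative D) (at z)"
      using Suc.prems by (auto simp: differentiable_def)
    then have "((\<lambda>(t, x). g t x) has_derivative D) (at z)"
      by (rule has_derivative_transform_within_open[OF _ assms(1) z])
         (use Suc.prems in \<open>auto simp: case_prod_beta'\<close>)
    then show "(\<lambda>(t, x). g t x) differentiable (at z)" by (auto simp: differentiable_def)
  qed
  moreover have "Ck_on k N (pt g)" "Ck_on k N (px g)"
    using Suc.IH[of "pt f" "pt g"] Suc.IH[of "px f" "px g"] Suc.prems
      pt_eq_cong[OF assms(1) Suc.prems(1)] by auto
  ultimately show ?case by simp
qed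

lemma sm_Ck:
  assumes "open N" "sm N f"
  shows "Ck_on k N f"
  using assms(2)
proof (induction k arbitrary: f)
  case 0
  from sm_deriv[OF 0] obtain f1 f2 where
   "\<forall>z\<in>N. ((\<lambda>p. f (fst p) (snd p)) has_derivative
     (\<lambda>h. f1 (fst z) (snd z) * fst h + f2 (fst z) (snd z) * snd h)) (at z)" by blast
  then have "\<forall>z\<in>N. continuous (at z) (\<lambda>p. f (fst p) (snd p))"
    using has_derivative_continuous by blast
  then show ?case by (simp add: case_prod_beta' continuous_at_imp_continuous_on)
next
  case (Suc k)
  from sm_deriv[OF Suc.prems] obtain f1 f2 where f: "sm N f1" "sm N f2"
   "\<forall>z\<in>N. ((\<lambda>p. f (fst p) (snd p)) has_derivative
     (\<lambda>h. f1 (fst z) (snd z) * fst h + f2 (fst z) (snd z) * snd h)) (at z)" by blast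
  have dif: "\<forall>z\<in>N. (\<lambda>(t, x). f t x) differentiable (at z)"
    using f(3) by (auto simp: differentiable_def case_prod_beta')
  have pt: "pt f t x = f1 t x \<and> px f t x = f2 t x" if "(t, x) \<in> N" for t x
  proof -
    have d: "((\<lambda>p. f (fst p) (snd p)) has_derivative
     (\<lambda>h. f1 t x * fst h + f2 t x * snd h)) (at (t, x))" using f(3) that by auto
    have "((\<lambda>s. (s, x)) has_derivative (\<lambda>h. (h, 0))) (at t)"
      by (auto intro!: derivative_eq_intros)
    from has_derivative_compose[OF this d]
    have "((\<lambda>s. f s x) has_real_derivative f1 t x) (at t)"
      unfolding has_field_derivative_def by (simp add: mult_commute_abs)
    moreover have "((\<lambda>s. (t, s)) has_derivative (\<lambda>h. (0, h))) (at x)"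
      by (auto intro!: derivative_eq_intros)
    from has_derivative_compose[OF this d]
    have "((\<lambda>y. f t y) has_real_derivative f2 t x) (at x)"
      unfolding has_field_derivative_def by (simp add: mult_commute_abs)
    ultimately show ?thesis unfolding pt_def px_def by (auto intro: DERIV_imp_deriv)
  qed
  have "Ck_on k N (pt f)"
    by (rule Ck_cong[OF assms(1) _ Suc.IH[OF f(1)]]) (use pt in auto)
  moreover have "Ck_on k N (px f)"
    by (rule Ck_cong[OF assms(1) _ Suc.IH[OF f(2)]]) (use pt in auto)
  ultimately show ?case using dif by simp
qed

lemma sm_diff: "sm N f \<Longrightarrow> sm N g \<Longrightarrow> sm N (\<lambda>t x. f t x - g t x)"
proof -
  assume "sm N f" "sm N g"
  then have "sm N (\<lambda>t x. f t x + (\<lambda>t x. -1) t x * g t x)" by (intro sm_add sm_mult sm_const)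
  then show ?thesis by simp
qed

lemma sm_uminus: "sm N f \<Longrightarrow> sm N (\<lambda>t x. - f t x)"
proof -
  assume "sm N f"
  then have "sm N (\<lambda>t x. (\<lambda>t x. -1) t x * f t x)" by (intro sm_mult sm_const)
  then show ?thesis by simp
qed

lemma sm_pow: "sm N f \<Longrightarrow> sm N (\<lambda>t x. f t x ^ n)"
proof (induction n)
  case 0 then show ?case using sm_const[of N 1] by simp
next
  case (Suc n)
  then have "sm N (\<lambda>t x. f t x * f t x ^ n)" by (intro sm_mult)
  then show ?case by simp
qed

definition lnD :: "nat \<Rightarrow> real \<Rightarrow> real" where
  "lnD k y = (if k = 0 then ln y else (-1) ^ (k - 1) * fact (k - 1) / y ^ k)"

lemma lnD_deriv: "y \<in> {0<..} \<Longrightarrow> (lnD k has_real_derivative lnD (Suc k) y) (at y)"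
proof (cases k)
  case 0
  assume "y \<in> {0<..}"
  then show ?thesis using 0 unfolding lnD_def
    by (auto intro!: derivative_eq_intros)
next
  case (Suc m)
  assume y: "y \<in> {0<..}"
  have "((\<lambda>y. (-1) ^ m * fact m / y ^ Suc m) has_real_derivative
        (-1) ^ Suc m * fact (Suc m) / y ^ Suc (Suc m)) (at y)"
    using y by (auto intro!: derivative_eq_intros simp: field_simps) (cases m, auto)
  moreover have "lnD k = (\<lambda>y. (-1) ^ m * fact m / y ^ Suc m)"
    using Suc by (auto simp: lnD_def fun_eq_iff)
  ultimately show ?thesis using Suc by (simp add: lnD_def)
qed

lemma sm_ln: assumes "sm N g" "\<forall>z\<in>N. 0 < g (fst z) (snd z)" shows "sm N (\<lambda>t x. ln (g t x))"
proof -
  have "sm N (\<lambda>t x. lnD 0 (g t x))"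
    by (rule sm_comp[where Om="{0<..}" and D=lnD]) (use assms in \<open>auto intro: lnD_deriv\<close>)
  then show ?thesis by (simp add: lnD_def)
qed


lemma smooth_cong:
  assumes "open N" "\<forall>z\<in>N. f (fst z) (snd z) = g (fst z) (snd z)" "sm N g"
  shows "smooth2_on N f"
  unfolding smooth2_on_def using Ck_cong[OF assms(1), of g f] sm_Ck[OF assms(1,3)] assms(2) by auto

lemma second_cong:
  assumes "open N" "\<forall>z\<in>N. f (fst z) (snd z) = g (fst z) (snd z)" "(t, x) \<in> N"
  shows "pt f t x = pt g t x \<and> px f t x = px g t x \<and> pt (pt f) t x = pt (pt g) t x
    \<and> px (px f) t x = px (px g) t x"
proof -
  have "\<forall>z\<in>N. pt f (fst z) (snd z) = pt g (fst z) (snd z) \<and> px f (fst z) (snd z) = px g (fst z) (snd z)"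
    using pt_eq_cong[OF assms(1,2)] by auto
  then show ?thesis using pt_eq_cong[OF assms(1) _ assms(3), of "pt f" "pt g"]
      pt_eq_cong[OF assms(1) _ assms(3), of "px f" "px g"] pt_eq_cong[OF assms(1,2,3)] by auto
qed

lemma eventually_pt:
  assumes "open S" "t \<in> S" "\<And>s. s \<in> S \<Longrightarrow> f s x = h s" "(h has_real_derivative d) (at t)"
  shows "pt f t x = d"
proof -
  have "\<forall>\<^sub>F s in nhds t. f s x = h s" using assms(1,2,3) eventually_nhds by blast
  then have "pt f t x = deriv h t" unfolding pt_def by (rule deriv_cong_ev) simp
  then show ?thesis using assms(4) DERIV_imp_deriv by simp
qed

lemma eventually_px:
  assumes "open S" "x \<in> S" "\<And>s. s \<in> S \<Longrightarrow> f t s = h s" "(h has_real_derivative d) (at x)"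
  shows "px f t x = d"
proof -
  have "\<forall>\<^sub>F s in nhds x. f t s = h s" using assms(1,2,3) eventually_nhds by blast
  then have "px f t x = deriv h x" unfolding px_def by (rule deriv_cong_ev) simp
  then show ?thesis using assms(4) DERIV_imp_deriv by simp
qed

lemma blowup_lim:
  fixes \<alpha> T \<kappa> :: real assumes "0 < \<alpha>" "0 < T"
  shows "filterlim (\<lambda>t. - \<alpha> * ln (1 - t / T) + \<kappa>) at_top (at_left T)"
proof -
  have "((\<lambda>t. 1 - t / T) \<longlongrightarrow> 1 - T / T) (at_left T)"
    by (intro tendsto_intros) (use assms in auto)
  then have "((\<lambda>t. 1 - t / T) \<longlongrightarrow> 0) (at_left T)" using assms by simp
  moreover have "\<forall>\<^sub>F t in at_left T. 1 - t / T \<in> {0<..} \<and> 1 - t / T \<noteq> 0"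
    using eventually_at_left_real[of "T - 1" T] by (rule eventually_mono) (use assms in auto)
  ultimately have "filterlim (\<lambda>t. 1 - t / T) (at_right 0) (at_left T)"
    by (simp add: filterlim_at)
  from filterlim_compose[OF ln_at_0 this]
  have "filterlim (\<lambda>t. ln (1 - t / T)) at_bot (at_left T)" .
  then have "filterlim (\<lambda>t. - ln (1 - t / T)) at_top (at_left T)"
    by (simp add: filterlim_uminus_at_top)
  then have "filterlim (\<lambda>t. \<alpha> * (- ln (1 - t / T))) at_top (at_left T)"
    by (rule filterlim_tendsto_pos_mult_at_top[OF tendsto_const assms(1)])
  then have "filterlim (\<lambda>t. \<kappa> + \<alpha> * (- ln (1 - t / T))) at_top (at_left T)"
    by (rule filterlim_tendsto_add_at_top[OF tendsto_const])
  then show ?thesis by (simp add: algebra_simps)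
qed

lemma partA:
  fixes \<alpha> c \<kappa> T x0 :: real
  assumes a: "0 < \<alpha>" "\<alpha> \<le> 1" "0 < T" "c\<^sup>2 = 1 - \<alpha>"
    and U: "U = (\<lambda>y. - \<alpha> * ln (1 - c * y))"
  shows "(\<exists>N. open N \<and> Gamma T x0 \<subseteq> N \<and>
              smooth2_on N (gss \<alpha> U \<kappa> T x0) \<and> solves_A N (gss \<alpha> U \<kappa> T x0))"
proof -
  have c1: "\<bar>c\<bar> < 1"
  proof -
    have "\<bar>c\<bar>\<^sup>2 < 1\<^sup>2" using a by simp
    then show ?thesis by (simp add: abs_square_less_1)
  qed
  define L where "L t x = T - t - c * (x - x0)" for t x
  define N where "N = {p. fst p < T} \<inter> {p. 0 < L (fst p) (snd p)}"
  have oN: "open N" unfolding N_def L_def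
    by (intro open_Int open_Collect_less continuous_intros)
  have GN: "Gamma T x0 \<subseteq> N"
  proof
    fix z assume "z \<in> Gamma T x0"
    then obtain t x where z: "z = (t, x)" "0 \<le> t" "t < T" "\<bar>x - x0\<bar> \<le> T - t"
      unfolding Gamma_def by auto
    have "c * (x - x0) \<le> \<bar>c\<bar> * \<bar>x - x0\<bar>" by (metis abs_ge_self abs_mult)
    also have "\<dots> \<le> \<bar>c\<bar> * (T - t)" using z by (simp add: mult_left_mono)
    also have "\<dots> < T - t" using z c1 by simp
    finally show "z \<in> N" using z unfolding N_def L_def by auto
  qed
  define v where "v t x = - \<alpha> * ln (L t x) + (\<alpha> * ln T + \<kappa>)" for t x
  have eq: "\<forall>z\<in>N. gss \<alpha> U \<kappa> T x0 (fst z) (snd z) = v (fst z) (snd z)"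
  proof
    fix z assume "z \<in> N"
    then obtain t x where z: "z = (t, x)" "t < T" "0 < L t x" unfolding N_def by (cases z) auto
    have "1 - t / T = (T - t) / T" using a by (simp add: field_simps)
    then have 1: "ln (1 - t / T) = ln (T - t) - ln T" using z a by (simp add: ln_div)
    have "1 - c * ((x - x0) / (T - t)) = L t x / (T - t)" using z unfolding L_def by (simp add: field_simps)
    then have 2: "ln (1 - c * ((x - x0) / (T - t))) = ln (L t x) - ln (T - t)" using z by (simp add: ln_div)
    have 3: "ln (L t x) = ln T + ln (1 - t / T) + ln (1 - c * ((x - x0) / (T - t)))"
      using 1 2 by linarith
    show "gss \<alpha> U \<kappa> T x0 (fst z) (snd z) = v (fst z) (snd z)"
      unfolding gss_def v_def U using z by (simp add: 3 algebra_simps)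
  qed
  have smv: "sm N v" unfolding v_def L_def
    by (intro sm_add sm_mult sm_const sm_diff sm_fst sm_snd sm_ln) (auto simp: N_def L_def)
  have pt1: "pt v t x = \<alpha> / L t x" if "0 < L t x" for t x
  proof (rule eventually_pt[where S="{s. 0 < L s x}" and h="\<lambda>s. v s x"])
    show "open {s. 0 < L s x}" unfolding L_def by (intro open_Collect_less continuous_intros)
    show "((\<lambda>s. v s x) has_real_derivative \<alpha> / L t x) (at t)" unfolding v_def L_def
      using that by (auto intro!: derivative_eq_intros simp: L_def)
  qed (use that in auto)
  have px1: "px v t x = \<alpha> * c / L t x" if "0 < L t x" for t x
  proof (rule eventually_px[where S="{s. 0 < L t s}" and h="\<lambda>s. v t s"])
    show "open {s. 0 < L t s}" unfolding L_def by (intro open_Collect_less continuous_intros)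
    show "((\<lambda>s. v t s) has_real_derivative \<alpha> * c / L t x) (at x)" unfolding v_def L_def
      using that by (auto intro!: derivative_eq_intros simp: L_def)
  qed (use that in auto)
  have pt2: "pt (pt v) t x = \<alpha> / (L t x)\<^sup>2" if "0 < L t x" for t x
  proof (rule eventually_pt[where S="{s. 0 < L s x}" and h="\<lambda>s. \<alpha> / L s x"])
    show "open {s. 0 < L s x}" unfolding L_def by (intro open_Collect_less continuous_intros)
    show "((\<lambda>s. \<alpha> / L s x) has_real_derivative \<alpha> / (L t x)\<^sup>2) (at t)" unfolding L_def
      using that by (auto intro!: derivative_eq_intros simp: L_def power2_eq_square)
  qed (use that pt1 in auto)
  have px2: "px (px v) t x = \<alpha> * c\<^sup>2 / (L t x)\<^sup>2" if "0 < L t x" for t x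
  proof (rule eventually_px[where S="{s. 0 < L t s}" and h="\<lambda>s. \<alpha> * c / L t s"])
    show "open {s. 0 < L t s}" unfolding L_def by (intro open_Collect_less continuous_intros)
    show "((\<lambda>s. \<alpha> * c / L t s) has_real_derivative \<alpha> * c\<^sup>2 / (L t x)\<^sup>2) (at x)" unfolding L_def
      using that by (auto intro!: derivative_eq_intros simp: L_def power2_eq_square)
  qed (use that px1 in auto)
  have sm2: "smooth2_on N (gss \<alpha> U \<kappa> T x0)" by (rule smooth_cong[OF oN eq smv])
  have "solves_A N (gss \<alpha> U \<kappa> T x0)"
    unfolding solves_A_def
  proof (intro conjI ballI)
    show "Ck_on 2 N (gss \<alpha> U \<kappa> T x0)" using sm2 unfolding smooth2_on_def by blast
    fix z assume zN: "z \<in> N"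
    then obtain t x where z: "z = (t, x)" "0 < L t x" unfolding N_def by (cases z) auto
    have "pt (pt v) t x - px (px v) t x = (pt v t x)\<^sup>2"
    proof -
      have "\<alpha> + c * c = 1" using a(4) by (simp add: power2_eq_square)
      then have "\<alpha> * (\<alpha> + c * c) = \<alpha>" by simp
      then have ac: "\<alpha> = \<alpha> * \<alpha> + \<alpha> * (c * c)" by (simp add: algebra_simps)
      show ?thesis using z a by (simp add: pt1 px1 pt2 px2 field_simps power2_eq_square ac[symmetric])
    qed
    then show "case z of (t, x) \<Rightarrow> pt (pt (gss \<alpha> U \<kappa> T x0)) t x - px (px (gss \<alpha> U \<kappa> T x0)) t x =
          (pt (gss \<alpha> U \<kappa> T x0) t x)\<^sup>2"
      using second_cong[OF oN eq, of t x] zN z by auto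
  qed
  then show ?thesis using oN GN sm2 by blast
qed

lemma partB:
  fixes \<beta> \<kappa> T x0 :: real and \<alpha> :: nat
  assumes a: "1 \<le> \<alpha>" "0 < \<beta>" "0 < T"
  shows "(\<exists>N. open N \<and> Gamma T x0 \<subseteq> N \<and>
           smooth2_on N (gss (real \<alpha>) (U_B \<alpha> \<beta>) \<kappa> T x0) \<and>
           solves_B N (gss (real \<alpha>) (U_B \<alpha> \<beta>) \<kappa> T x0))"
proof -
  define Q where "Q t x = (T - t + (x - x0)) ^ \<alpha> + \<beta> * (T - t - (x - x0)) ^ \<alpha>" for t x
  define N where "N = {p. fst p < T} \<inter> {p. 0 < Q (fst p) (snd p)}"
  have oN: "open N" unfolding N_def Q_def
    by (intro open_Int open_Collect_less continuous_intros)
  have GN: "Gamma T x0 \<subseteq> N"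
  proof
    fix z assume "z \<in> Gamma T x0"
    then obtain t x where z: "z = (t, x)" "0 \<le> t" "t < T" "\<bar>x - x0\<bar> \<le> T - t"
      unfolding Gamma_def by auto
    have p1: "0 \<le> T - t + (x - x0)" "0 \<le> T - t - (x - x0)" using z by auto
    have "0 < T - t + (x - x0) \<or> 0 < T - t - (x - x0)" using z by auto
    then have "0 < Q t x" unfolding Q_def
    proof
      assume "0 < T - t + (x - x0)"
      then show "0 < (T - t + (x - x0)) ^ \<alpha> + \<beta> * (T - t - (x - x0)) ^ \<alpha>"
        using p1 a by (intro add_pos_nonneg) auto
    next
      assume "0 < T - t - (x - x0)"
      then show "0 < (T - t + (x - x0)) ^ \<alpha> + \<beta> * (T - t - (x - x0)) ^ \<alpha>"
        using p1 a by (intro add_nonneg_pos) auto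
    qed
    then show "z \<in> N" using z unfolding N_def by auto
  qed
  define v where "v t x = - ln (Q t x) + (real \<alpha> * ln T + ln (1 + \<beta>) + \<kappa>)" for t x
  have eq: "\<forall>z\<in>N. gss (real \<alpha>) (U_B \<alpha> \<beta>) \<kappa> T x0 (fst z) (snd z) = v (fst z) (snd z)"
  proof
    fix z assume "z \<in> N"
    then obtain t x where z: "z = (t, x)" "t < T" "0 < Q t x" unfolding N_def by (cases z) auto
    have "1 - t / T = (T - t) / T" using a by (simp add: field_simps)
    then have 1: "ln (1 - t / T) = ln (T - t) - ln T" using z a by (simp add: ln_div)
    have "(1 + (x - x0) / (T - t)) ^ \<alpha> + \<beta> * (1 - (x - x0) / (T - t)) ^ \<alpha> = Q t x / (T - t) ^ \<alpha>"
    proof -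
      have e1: "1 + (x - x0) / (T - t) = (T - t + (x - x0)) / (T - t)"
       and e2: "1 - (x - x0) / (T - t) = (T - t - (x - x0)) / (T - t)" using z by (auto simp: field_simps)
      show ?thesis unfolding e1 e2 Q_def power_divide by (simp add: add_divide_distrib)
    qed
    then have 2: "ln ((1 + (x - x0) / (T - t)) ^ \<alpha> + \<beta> * (1 - (x - x0) / (T - t)) ^ \<alpha>)
       = ln (Q t x) - real \<alpha> * ln (T - t)" using z by (simp add: ln_div ln_realpow)
    show "gss (real \<alpha>) (U_B \<alpha> \<beta>) \<kappa> T x0 (fst z) (snd z) = v (fst z) (snd z)"
      unfolding gss_def v_def U_B_def using z by (simp add: 1 2 algebra_simps)
  qed
  have smv: "sm N v" unfolding v_def Q_def
    by (intro sm_add sm_mult sm_const sm_diff sm_fst sm_snd sm_ln sm_pow sm_uminus) (auto simp: N_def Q_def)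
  define P where "P t x = real \<alpha> * (T - t + (x - x0)) ^ (\<alpha> - 1)" for t x
  define R where "R t x = \<beta> * real \<alpha> * (T - t - (x - x0)) ^ (\<alpha> - 1)" for t x
  define P2 where "P2 t x = real \<alpha> * real (\<alpha> - 1) * (T - t + (x - x0)) ^ (\<alpha> - 1 - 1)" for t x
  define R2 where "R2 t x = \<beta> * real \<alpha> * real (\<alpha> - 1) * (T - t - (x - x0)) ^ (\<alpha> - 1 - 1)" for t x
  have oS: "open {s. 0 < Q s x}" "open {s. 0 < Q t s}" for t x unfolding Q_def
    by (intro open_Collect_less continuous_intros)+
  have pt1: "pt v t x = (P t x + R t x) / Q t x" if "0 < Q t x" for t x
  proof (rule eventually_pt[where S="{s. 0 < Q s x}" and h="\<lambda>s. v s x"])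
    show "((\<lambda>s. v s x) has_real_derivative (P t x + R t x) / Q t x) (at t)" unfolding v_def Q_def
      using that by (auto intro!: derivative_eq_intros simp: Q_def P_def R_def field_simps)
  qed (use that oS in auto)
  have px1: "px v t x = (R t x - P t x) / Q t x" if "0 < Q t x" for t x
  proof (rule eventually_px[where S="{s. 0 < Q t s}" and h="\<lambda>s. v t s"])
    show "((\<lambda>s. v t s) has_real_derivative (R t x - P t x) / Q t x) (at x)" unfolding v_def Q_def
      using that by (auto intro!: derivative_eq_intros simp: Q_def P_def R_def field_simps)
  qed (use that oS in auto)
  have pt2: "pt (pt v) t x = ((P t x + R t x)\<^sup>2 - (P2 t x + R2 t x) * Q t x) / (Q t x)\<^sup>2"
    if "0 < Q t x" for t x
  proof (rule eventually_pt[where S="{s. 0 < Q s x}" and h="\<lambda>s. (P s x + R s x) / Q s x"])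
    show "((\<lambda>s. (P s x + R s x) / Q s x) has_real_derivative
       ((P t x + R t x)\<^sup>2 - (P2 t x + R2 t x) * Q t x) / (Q t x)\<^sup>2) (at t)"
      unfolding P_def R_def Q_def
      using that by (auto intro!: derivative_eq_intros simp: Q_def P_def R_def P2_def R2_def field_simps power2_eq_square)
  qed (use that oS pt1 in auto)
  have px2: "px (px v) t x = ((R t x - P t x)\<^sup>2 - (P2 t x + R2 t x) * Q t x) / (Q t x)\<^sup>2"
    if "0 < Q t x" for t x
  proof (rule eventually_px[where S="{s. 0 < Q t s}" and h="\<lambda>s. (R t s - P t s) / Q t s"])
    show "((\<lambda>s. (R t s - P t s) / Q t s) has_real_derivative
       ((R t x - P t x)\<^sup>2 - (P2 t x + R2 t x) * Q t x) / (Q t x)\<^sup>2) (at x)"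
      unfolding P_def R_def Q_def
      using that by (auto intro!: derivative_eq_intros simp: Q_def P_def R_def P2_def R2_def field_simps power2_eq_square)
  qed (use that oS px1 in auto)
  have sm2: "smooth2_on N (gss (real \<alpha>) (U_B \<alpha> \<beta>) \<kappa> T x0)" by (rule smooth_cong[OF oN eq smv])
  have "solves_B N (gss (real \<alpha>) (U_B \<alpha> \<beta>) \<kappa> T x0)"
    unfolding solves_B_def
  proof (intro conjI ballI)
    show "Ck_on 2 N (gss (real \<alpha>) (U_B \<alpha> \<beta>) \<kappa> T x0)" using sm2 unfolding smooth2_on_def by blast
    fix z assume zN: "z \<in> N"
    then obtain t x where z: "z = (t, x)" "0 < Q t x" unfolding N_def by (cases z) auto
    have "pt (pt v) t x - px (px v) t x = (pt v t x)\<^sup>2 - (px v t x)\<^sup>2"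
      using z by (simp add: pt1 px1 pt2 px2 field_simps power2_eq_square)
    then show "case z of (t, x) \<Rightarrow> pt (pt (gss (real \<alpha>) (U_B \<alpha> \<beta>) \<kappa> T x0)) t x
       - px (px (gss (real \<alpha>) (U_B \<alpha> \<beta>) \<kappa> T x0)) t x =
          (pt (gss (real \<alpha>) (U_B \<alpha> \<beta>) \<kappa> T x0) t x)\<^sup>2 - (px (gss (real \<alpha>) (U_B \<alpha> \<beta>) \<kappa> T x0) t x)\<^sup>2"
      using second_cong[OF oN eq, of t x] zN z by auto
  qed
  then show ?thesis using oN GN sm2 by blast
qed

lemma ode_main:
  fixes V G g :: "real \<Rightarrow> real"
  assumes dV: "\<And>y. -1 < y \<Longrightarrow> y < 1 \<Longrightarrow> (V has_real_derivative - (V y)\<^sup>2 * g y) (at y)"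
    and dG: "\<And>y. -1 < y \<Longrightarrow> y < 1 \<Longrightarrow> (G has_real_derivative g y) (at y)"
    and y: "-1 < a" "a < b" "b < 1" "V a \<noteq> 0" "G b = G a - 1 / V a"
  shows False
proof -
  define C where "C = 1 / V a - G a"
  have GC: "G b + C = 0" using y unfolding C_def by simp
  define Z where "Z = {z \<in> {a..b}. V z = 0} \<union> {b}"
  have contV: "continuous_on {a..b} V"
    using y by (intro continuous_at_imp_continuous_on ballI DERIV_isCont[OF dV]) auto
  have cZ: "closed Z" unfolding Z_def
    by (intro closed_Un continuous_closed_preimage_constant contV) auto
  have bZ: "bdd_below Z" unfolding Z_def by (rule bdd_belowI[of _ a]) (use y in auto)
  define c2 where "c2 = Inf Z"
  have c2Z: "c2 \<in> Z" unfolding c2_def by (rule closed_contains_Inf[OF _ bZ cZ]) (auto simp: Z_def)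
  have c2le: "c2 \<le> b" unfolding c2_def by (rule cInf_lower[OF _ bZ]) (auto simp: Z_def)
  have c2ge: "a \<le> c2" using c2Z y unfolding Z_def by auto
  have nz: "V z \<noteq> 0" if "a \<le> z" "z < c2" for z
  proof
    assume "V z = 0"
    then have "z \<in> Z" using that c2le unfolding Z_def by auto
    then have "c2 \<le> z" unfolding c2_def by (rule cInf_lower[OF _ bZ])
    then show False using that by simp
  qed
  have a2: "a < c2"
  proof -
    have "c2 \<noteq> a" using c2Z y unfolding Z_def by auto
    then show ?thesis using c2ge by simp
  qed
  have K: "1 / V z - G z = C" if "a \<le> z" "z < c2" for z
  proof (cases "z = a")
    case True then show ?thesis unfolding C_def by simp
  next
    case False
    then have zz: "a < z" using that by simp
    have d: "((\<lambda>w. 1 / V w - G w) has_real_derivative 0) (at w)" if "a \<le> w" "w \<le> z" for w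
    proof -
      have w: "-1 < w" "w < 1" "V w \<noteq> 0" using that \<open>z < c2\<close> c2le y nz[of w] by auto
      have dv: "(V has_real_derivative - (V w)\<^sup>2 * g w) (at w)" using dV w by auto
      have dg: "(G has_real_derivative g w) (at w)" using dG w by auto
      show ?thesis
        by (rule DERIV_cong[OF DERIV_diff[OF DERIV_divide[OF DERIV_const dv] dg]])
           (use w in \<open>auto simp: field_simps power2_eq_square\<close>)
    qed
    have "(\<lambda>w. 1 / V w - G w) z = (\<lambda>w. 1 / V w - G w) a"
      by (rule DERIV_isconst_end[OF zz])
         (use d in \<open>auto intro!: continuous_at_imp_continuous_on DERIV_isCont\<close>)
    then show ?thesis unfolding C_def by simp
  qed
  have H: "V z * (G z + C) = 1" if "a < z" "z < c2" for z
  proof -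
    have "G z + C = 1 / V z" using K[of z] that by simp
    then show ?thesis using nz[of z] that by simp
  qed
  have "isCont (\<lambda>z. V z * (G z + C)) c2"
    using y a2 c2le by (intro continuous_intros DERIV_isCont[OF dV] DERIV_isCont[OF dG]) auto
  then have "((\<lambda>z. V z * (G z + C)) \<longlongrightarrow> V c2 * (G c2 + C)) (at_left c2)"
    unfolding isCont_def filterlim_at_split by simp
  moreover have "((\<lambda>z. V z * (G z + C)) \<longlongrightarrow> 1) (at_left c2)"
    by (rule tendsto_eventually, rule eventually_mono[OF eventually_at_left_real[OF a2]])
       (use H in auto)
  ultimately have "V c2 * (G c2 + C) = 1"
    using tendsto_unique[OF trivial_limit_at_left_real] by blast
  then show False using c2Z GC unfolding Z_def by auto
qed

lemma ode_any:
  fixes V G g :: "real \<Rightarrow> real"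
  assumes dV: "\<And>y. -1 < y \<Longrightarrow> y < 1 \<Longrightarrow> (V has_real_derivative - (V y)\<^sup>2 * g y) (at y)"
    and dG: "\<And>y. -1 < y \<Longrightarrow> y < 1 \<Longrightarrow> (G has_real_derivative g y) (at y)"
    and y: "-1 < a" "a < 1" "-1 < b" "b < 1" "V a \<noteq> 0" "G b = G a - 1 / V a"
  shows False
proof (cases "a < b")
  case True then show ?thesis using ode_main[OF dV dG] y by blast
next
  case False
  have "b \<noteq> a" using y by auto
  with False have lt: "b < a" by simp
  have dV': "((\<lambda>y. - V (- y)) has_real_derivative - ((\<lambda>y. - V (- y)) y)\<^sup>2 * g (- y)) (at y)"
    if "-1 < y" "y < 1" for y
  proof -
    have "((\<lambda>y. V (- y)) has_real_derivative (- (V (- y))\<^sup>2 * g (- y)) * (-1)) (at y)"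
      by (rule DERIV_chain2[OF dV]) (use that in \<open>auto intro!: derivative_eq_intros\<close>)
    from DERIV_minus[OF this] show ?thesis by simp
  qed
  have dG': "((\<lambda>y. - G (- y)) has_real_derivative g (- y)) (at y)"
    if "-1 < y" "y < 1" for y
  proof -
    have "((\<lambda>y. G (- y)) has_real_derivative g (- y) * (-1)) (at y)"
      by (rule DERIV_chain2[OF dG]) (use that in \<open>auto intro!: derivative_eq_intros\<close>)
    from DERIV_minus[OF this] show ?thesis by simp
  qed
  show ?thesis
    by (rule ode_main[where V="\<lambda>y. - V (- y)" and G="\<lambda>y. - G (- y)" and g="\<lambda>y. g (- y)"
          and a="- a" and b="- b", OF dV' dG']) (use y lt in auto)
qed

lemma alg1: "(h::real) \<noteq> 0 \<Longrightarrow> (0 * h\<^sup>2 - w * (real 2 * ((0 - 1) * h ^ (2 - Suc 0)))) / (h\<^sup>2 * h\<^sup>2) = 2 * w / h ^ 3"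
  by (simp add: field_simps eval_nat_numeral)

lemma ss_derivs:
  fixes U D1 D2 :: "real \<Rightarrow> real" and T x0 t x :: real
  assumes dU: "\<And>y. -1 < y \<Longrightarrow> y < 1 \<Longrightarrow> (U has_real_derivative D1 y) (at y)"
    and dD: "\<And>y. -1 < y \<Longrightarrow> y < 1 \<Longrightarrow> (D1 has_real_derivative D2 y) (at y)"
    and u: "u = (\<lambda>t x. U ((x - x0) / (T - t)))"
    and tx: "\<bar>x - x0\<bar> < T - t"
  shows "pt u t x = D1 ((x - x0) / (T - t)) * ((x - x0) / (T - t)^2)"
    "px u t x = D1 ((x - x0) / (T - t)) / (T - t)"
    "pt (pt u) t x = D2 ((x - x0) / (T - t)) * ((x - x0) / (T - t)^2)^2
        + D1 ((x - x0) / (T - t)) * (2 * (x - x0) / (T - t)^3)"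
    "px (px u) t x = D2 ((x - x0) / (T - t)) / (T - t)^2"
proof -
  have Yin: "-1 < (x - x0) / (T - s) \<and> (x - x0) / (T - s) < 1" if "\<bar>x - x0\<bar> < T - s" for s x
  proof -
    have h: "0 < T - s" using that by linarith
    have a: "-(T-s) < x - x0" "x - x0 < T - s" using that by linarith+
    show ?thesis using a h by (simp add: pos_divide_less_eq pos_less_divide_eq)
  qed
  have inner: "((\<lambda>s. (x - x0) / (T - s)) has_real_derivative (x - x0) / (T - s)^2) (at s)"
    if "s \<noteq> T" for s x
    using that by (auto intro!: derivative_eq_intros simp: field_simps power2_eq_square)
  have inner2: "((\<lambda>s. (x - x0) / (T - s)^2) has_real_derivative 2 * (x - x0) / (T - s)^3) (at s)"
    if "s \<noteq> T" for s x
  proof -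
    have h: "T - s \<noteq> 0" using that by simp
    show ?thesis
      by (rule DERIV_cong[OF DERIV_divide[OF DERIV_const DERIV_power[OF DERIV_diff[OF DERIV_const DERIV_ident]]]])
         (use h in simp, rule alg1[OF h])
  qed
  have innerx: "((\<lambda>y. (y - x0) / (T - t)) has_real_derivative 1 / (T - t)) (at y)" if "t \<noteq> T" for y t
    using that by (auto intro!: derivative_eq_intros)
  have innerx2: "((\<lambda>y. 1 / (T - t)) has_real_derivative 0) (at y)" for y t
    by (auto intro!: derivative_eq_intros)
  have pt1: "pt u s x = D1 ((x - x0) / (T - s)) * ((x - x0) / (T - s)^2)"
    if "\<bar>x - x0\<bar> < T - s" for s x
  proof -
    have "s \<noteq> T" using that by auto
    from DERIV_chain2[OF dU inner[OF this]] Yin[OF that]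
    have "((\<lambda>s. U ((x - x0) / (T - s))) has_real_derivative
      D1 ((x - x0) / (T - s)) * ((x - x0) / (T - s)^2)) (at s)" by auto
    then show ?thesis unfolding pt_def u by (rule DERIV_imp_deriv)
  qed
  have px1: "px u t y = D1 ((y - x0) / (T - t)) / (T - t)"
    if "\<bar>y - x0\<bar> < T - t" for y t
  proof -
    have "t \<noteq> T" using that by auto
    from DERIV_chain2[OF dU innerx[OF this]] Yin[OF that]
    have "((\<lambda>y. U ((y - x0) / (T - t))) has_real_derivative
      D1 ((y - x0) / (T - t)) * (1 / (T - t))) (at y)" by auto
    then show ?thesis unfolding px_def u by (auto dest: DERIV_imp_deriv)
  qed
  show "pt u t x = D1 ((x - x0) / (T - t)) * ((x - x0) / (T - t)^2)" using pt1[OF tx] .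
  show "px u t x = D1 ((x - x0) / (T - t)) / (T - t)" using px1[OF tx] .
  show "pt (pt u) t x = D2 ((x - x0) / (T - t)) * ((x - x0) / (T - t)^2)^2
        + D1 ((x - x0) / (T - t)) * (2 * (x - x0) / (T - t)^3)"
  proof (rule eventually_pt[where S="{s. \<bar>x - x0\<bar> < T - s}"
        and h="\<lambda>s. D1 ((x - x0) / (T - s)) * ((x - x0) / (T - s)^2)"])
    show "open {s. \<bar>x - x0\<bar> < T - s}" by (intro open_Collect_less continuous_intros)
    have tT: "t \<noteq> T" using tx by auto
    have dd: "(D1 has_real_derivative D2 ((x - x0) / (T - t))) (at ((x - x0) / (T - t)))"
      using dD Yin[OF tx] by auto
    from DERIV_mult[OF DERIV_chain2[OF dd inner[of t x, OF tT]] inner2[of t x, OF tT]]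
    show "((\<lambda>s. D1 ((x - x0) / (T - s)) * ((x - x0) / (T - s)^2)) has_real_derivative
       D2 ((x - x0) / (T - t)) * ((x - x0) / (T - t)^2)^2
        + D1 ((x - x0) / (T - t)) * (2 * (x - x0) / (T - t)^3)) (at t)"
      by (rule DERIV_cong) (simp only: power2_eq_square mult_ac add_ac)
  qed (use tx pt1 in auto)
  show "px (px u) t x = D2 ((x - x0) / (T - t)) / (T - t)^2"
  proof (rule eventually_px[where S="{y. \<bar>y - x0\<bar> < T - t}"
        and h="\<lambda>y. D1 ((y - x0) / (T - t)) / (T - t)"])
    show "open {y. \<bar>y - x0\<bar> < T - t}" by (intro open_Collect_less continuous_intros)
    have "t \<noteq> T" using tx by auto
    from DERIV_chain2[OF dD innerx[OF this]] Yin[OF tx]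
    have "((\<lambda>y. D1 ((y - x0) / (T - t))) has_real_derivative
      D2 ((x - x0) / (T - t)) * (1 / (T - t))) (at x)" by auto
    from DERIV_divide[OF this DERIV_const[of "T - t"]] tx
    show "((\<lambda>y. D1 ((y - x0) / (T - t)) / (T - t)) has_real_derivative
       D2 ((x - x0) / (T - t)) / (T - t)^2) (at x)"
      by (auto simp: power2_eq_square)
  qed (use tx px1 in auto)
qed

lemma setup_U:
  assumes "smooth_on_interval (-1) 1 U"
  obtains D1 D2 where
    "\<And>y. -1 < y \<Longrightarrow> y < 1 \<Longrightarrow> (U has_real_derivative D1 y) (at y)"
    "\<And>y. -1 < y \<Longrightarrow> y < 1 \<Longrightarrow> (D1 has_real_derivative D2 y) (at y)"
    "(\<And>y. -1 < y \<Longrightarrow> y < 1 \<Longrightarrow> D1 y = 0) \<Longrightarrow> \<forall>y\<in>{-1..1}. U y = U (-1)"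
proof -
  obtain D where D0: "\<forall>y\<in>{-1..1}. D 0 y = U y"
    and Dk: "\<forall>k. \<forall>y\<in>{-1..1}. (D k has_real_derivative D (Suc k) y) (at y within {-1..1})"
    using assms unfolding smooth_on_interval_def by blast
  have Dat: "(D k has_real_derivative D (Suc k) y) (at y)" if "-1 < y" "y < 1" for k y
  proof -
    have "y \<in> interior {-1..1::real}" using that by (simp add: interior_atLeastAtMost_real)
    then have "at y within {-1..1} = at y" by (rule at_within_interior)
    moreover have "(D k has_real_derivative D (Suc k) y) (at y within {-1..1})"
      using Dk that by simp
    ultimately show ?thesis by simp
  qed
  have dU: "(U has_real_derivative D 1 y) (at y)" if "-1 < y" "y < 1" for y
  proof -
    have "(D 0 has_derivative (*) (D 1 y)) (at y)"
      using Dat[OF that, of 0] by (simp add: has_field_derivative_def)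
    then have "(U has_derivative (*) (D 1 y)) (at y)"
      by (rule has_derivative_transform_within_open[where s="{-1<..<1}"])
         (use that D0 in auto)
    then show ?thesis by (simp add: has_field_derivative_def)
  qed
  have dD1: "(D 1 has_real_derivative D 2 y) (at y)" if "-1 < y" "y < 1" for y
    using Dat[OF that, of 1] by (simp add: numeral_2_eq_2)
  have const: "\<forall>y\<in>{-1..1}. U y = U (-1)" if z: "\<And>y. -1 < y \<Longrightarrow> y < 1 \<Longrightarrow> D 1 y = 0"
  proof
    fix y :: real assume y: "y \<in> {-1..1}"
    show "U y = U (-1)"
    proof (cases "y = -1")
      case False
      then have y1: "-1 < y" using y by auto
      have "continuous_on {-1..1} (D 0)"
        by (rule DERIV_continuous_on[of _ _ "D (Suc 0)"]) (use Dk in blast)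
      then have "continuous_on {-1..1} U"
        by (rule continuous_on_cong[THEN iffD1, rotated 2]) (use D0 in auto)
      then have cU: "continuous_on {-1..y} U"
        by (rule continuous_on_subset) (use y in auto)
      have "\<And>x. -1 < x \<Longrightarrow> x < y \<Longrightarrow> (U has_real_derivative 0) (at x)"
      proof -
        fix x assume x: "-1 < x" "x < y"
        then have "x < 1" using y by simp
        then show "(U has_real_derivative 0) (at x)" using dU[OF x(1)] z[OF x(1)] by simp
      qed
      then show ?thesis
        by (rule DERIV_isconst_end[OF y1 cU])
    qed simp
  qed
  show ?thesis
    by (rule that[OF dU dD1 const])
qed


lemma interior_pt:
  assumes "0 < T" "-1 < y" "y < 1"
  shows "(T / 2, x0 + y * T / 2) \<in> interior (Gamma T x0)"
proof -
  define S where "S = {p :: real \<times> real. 0 < fst p} \<inter> {p. fst p < T} \<inter> {p. \<bar>snd p - x0\<bar> < T - fst p}"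
  have "open S" unfolding S_def by (intro open_Int open_Collect_less continuous_intros)
  moreover have "S \<subseteq> Gamma T x0" unfolding S_def Gamma_def by auto
  moreover have "(T / 2, x0 + y * T / 2) \<in> S"
  proof -
    have "\<bar>y * T / 2\<bar> = \<bar>y\<bar> * (T / 2)" using assms by (simp add: abs_mult)
    also have "\<dots> < 1 * (T / 2)" using assms by (intro mult_strict_right_mono) auto
    finally show ?thesis unfolding S_def using assms by auto
  qed
  ultimately show ?thesis by (meson interior_maximal subsetD)
qed

lemma finish:
  fixes D1 g G :: "real \<Rightarrow> real"
  assumes dV: "\<And>y. -1 < y \<Longrightarrow> y < 1 \<Longrightarrow> ((\<lambda>y. (y\<^sup>2 - 1) * D1 y) has_real_derivative - ((y\<^sup>2 - 1) * D1 y)\<^sup>2 * g y) (at y)"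
    and dG: "\<And>y. -1 < y \<Longrightarrow> y < 1 \<Longrightarrow> (G has_real_derivative g y) (at y)"
    and surj: "\<And>M. \<exists>b. -1 < b \<and> b < 1 \<and> G b = M"
    and y: "-1 < y" "y < 1"
  shows "D1 y = 0"
proof (rule ccontr)
  assume "D1 y \<noteq> 0"
  moreover have "y\<^sup>2 - 1 \<noteq> 0" using y by (simp add: abs_square_eq_1)
  ultimately have V: "(y\<^sup>2 - 1) * D1 y \<noteq> 0" by simp
  obtain b where b: "-1 < b" "b < 1" "G b = G y - 1 / ((y\<^sup>2 - 1) * D1 y)" using surj by blast
  show False
    by (rule ode_any[where V="\<lambda>y. (y\<^sup>2 - 1) * D1 y", OF dV dG _ _ b(1,2)]) (use y V b in auto)
qed

lemma tanh_gt: "-1 < tanh (x::real)"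
  using tanh_real_lt_1[of "-x"] by (simp add: tanh_minus)

lemma surjB: "\<exists>b. -1 < b \<and> b < 1 \<and> artanh b = (M::real)"
  by (rule exI[of _ "tanh M"]) (simp add: tanh_gt tanh_real_lt_1 artanh_tanh_real)

definition GA :: "real \<Rightarrow> real" where
  "GA y = artanh y / 2 - y / (2 * (1 - y\<^sup>2))"

lemma alg_r: "(r::real) \<noteq> 0 \<Longrightarrow> q \<noteq> 0 \<Longrightarrow> a / r / (2 * (4 * q / r\<^sup>2)) = a * r / (8 * q)"
  by (simp add: field_simps power2_eq_square)

lemma GA_tanh: "GA (tanh \<tau>) = \<tau> / 2 - (exp (2 * \<tau>) - exp (- 2 * \<tau>)) / 8"
proof -
  define q where "q = exp (- 2 * \<tau>)"
  have q: "0 < q" unfolding q_def by simp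
  have e: "exp (2 * \<tau>) = 1 / q" unfolding q_def by (simp add: exp_minus field_simps)
  have t: "tanh \<tau> = (1 - q) / (1 + q)" unfolding q_def by (rule tanh_real_altdef)
  have p: "(1 + q)\<^sup>2 \<noteq> 0" using q by simp
  have d: "1 - ((1 - q) / (1 + q))\<^sup>2 = 4 * q / (1 + q)\<^sup>2"
    using p by (simp add: power_divide field_simps) (simp add: power2_eq_square algebra_simps)
  have q1: "1 + q \<noteq> 0" "q \<noteq> 0" using q by auto
  have "tanh \<tau> / (2 * (1 - (tanh \<tau>)\<^sup>2)) = (1 - q) / (1 + q) / (2 * (4 * q / (1 + q)\<^sup>2))"
    unfolding t d ..
  also have "\<dots> = (1 - q) * (1 + q) / (8 * q)" using q1 by (rule alg_r)
  also have "\<dots> = (1 / q - q) / 8" using q1 by (simp add: field_simps power2_eq_square)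
  finally have "tanh \<tau> / (2 * (1 - (tanh \<tau>)\<^sup>2)) = (1 / q - q) / 8" .
  then show ?thesis unfolding GA_def e q_def[symmetric] by (simp add: artanh_tanh_real)
qed

lemma surjA: "\<exists>b. -1 < b \<and> b < 1 \<and> GA b = (M::real)"
proof -
  define F where "F \<tau> = \<tau> / 2 - (exp (2 * \<tau>) - exp (- 2 * \<tau>)) / 8" for \<tau> :: real
  have Fodd: "F (- \<tau>) = - F \<tau>" for \<tau> unfolding F_def by (simp add: field_simps)
  have Fb: "F \<tau> \<le> \<tau> / 4 - \<tau>\<^sup>2 / 8" if "0 \<le> \<tau>" for \<tau>
  proof -
    have "1 + \<tau> \<le> exp \<tau>" by (rule exp_ge_add_one_self)
    then have "(1 + \<tau>)\<^sup>2 \<le> (exp \<tau>)\<^sup>2" using that by (intro power_mono) auto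
    also have "(exp \<tau>)\<^sup>2 = exp (2 * \<tau>)" by (simp add: power2_eq_square exp_add[symmetric])
    finally have 1: "(1 + \<tau>)\<^sup>2 \<le> exp (2 * \<tau>)" .
    have 2: "exp (- 2 * \<tau>) \<le> 1" using that by simp
    have 3: "(1 + \<tau>)\<^sup>2 = 1 + 2 * \<tau> + \<tau>\<^sup>2" by (simp add: power2_eq_square algebra_simps)
    have k: "2 * \<tau> + \<tau>\<^sup>2 \<le> exp (2 * \<tau>) - exp (- 2 * \<tau>)" using 1 2 3 by linarith
    show ?thesis unfolding F_def using k by (simp add: field_simps)
  qed
  define \<tau> where "\<tau> = 4 * \<bar>M\<bar> + 4"
  have tp: "0 \<le> \<tau>" unfolding \<tau>_def by simp
  have "F \<tau> \<le> \<tau> / 4 - \<tau>\<^sup>2 / 8" by (rule Fb[OF tp])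
  also have "\<dots> \<le> - \<tau> / 4" unfolding \<tau>_def by (simp add: power2_eq_square field_simps)
  finally have Fle: "F \<tau> \<le> - \<tau> / 4" .
  have t4: "- \<tau> / 4 = - \<bar>M\<bar> - 1" unfolding \<tau>_def by simp
  have le: "F \<tau> \<le> M" using Fle t4 by linarith
  have ge: "M \<le> F (- \<tau>)" using Fle Fodd[of \<tau>] t4 by linarith
  have "\<exists>x\<ge>- \<tau>. x \<le> \<tau> \<and> F x = M"
    by (rule IVT2'[of F \<tau> M "- \<tau>", OF le ge]) (use tp in \<open>auto simp: F_def intro!: continuous_intros\<close>)
  then obtain x where "F x = M" by blast
  then show ?thesis
    by (intro exI[of _ "tanh x"]) (simp add: tanh_gt tanh_real_lt_1 GA_tanh F_def)
qed

lemma algB: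
  fixes h y d1 d2 :: real
  assumes h: "h \<noteq> 0"
    and e: "d2 * ((y * h) / h^2)^2 + d1 * (2 * (y * h) / h^3) - d2 / h^2 = (d1 * ((y * h) / h^2))^2 - (d1 / h)^2"
  shows "(y\<^sup>2 - 1) * d2 + 2 * y * d1 = (y\<^sup>2 - 1) * d1\<^sup>2"
proof -
  have "h^2 * (d2 * ((y * h) / h^2)^2 + d1 * (2 * (y * h) / h^3) - d2 / h^2) = (y\<^sup>2 - 1) * d2 + 2 * y * d1"
    using h by (simp add: field_simps power2_eq_square power3_eq_cube)
  moreover have "h^2 * ((d1 * ((y * h) / h^2))^2 - (d1 / h)^2) = (y\<^sup>2 - 1) * d1\<^sup>2"
    using h by (simp add: field_simps power2_eq_square power3_eq_cube)
  ultimately show ?thesis using e by simp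
qed

lemma algA:
  fixes h y d1 d2 :: real
  assumes h: "h \<noteq> 0"
    and e: "d2 * ((y * h) / h^2)^2 + d1 * (2 * (y * h) / h^3) - d2 / h^2 = (d1 * ((y * h) / h^2))^2"
  shows "(y\<^sup>2 - 1) * d2 + 2 * y * d1 = y\<^sup>2 * d1\<^sup>2"
proof -
  have "h^2 * (d2 * ((y * h) / h^2)^2 + d1 * (2 * (y * h) / h^3) - d2 / h^2) = (y\<^sup>2 - 1) * d2 + 2 * y * d1"
    using h by (simp add: field_simps power2_eq_square power3_eq_cube)
  moreover have "h^2 * ((d1 * ((y * h) / h^2))^2) = y\<^sup>2 * d1\<^sup>2"
    using h by (simp add: field_simps power2_eq_square power3_eq_cube)
  ultimately show ?thesis using e by simp
qed

lemma ss_point: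
  fixes U D1 D2 :: "real \<Rightarrow> real" and z T y :: real
  assumes dU: "\<And>y. -1 < y \<Longrightarrow> y < 1 \<Longrightarrow> (U has_real_derivative D1 y) (at y)"
    and dD: "\<And>y. -1 < y \<Longrightarrow> y < 1 \<Longrightarrow> (D1 has_real_derivative D2 y) (at y)"
    and T: "0 < T" and y: "-1 < y" "y < 1"
  shows "(T / 2, z + y * T / 2) \<in> interior (Gamma T z)"
    "pt (\<lambda>t x. U ((x - z) / (T - t))) (T / 2) (z + y * T / 2) = D1 y * ((y * (T / 2)) / (T / 2)^2)"
    "px (\<lambda>t x. U ((x - z) / (T - t))) (T / 2) (z + y * T / 2) = D1 y / (T / 2)"
    "pt (pt (\<lambda>t x. U ((x - z) / (T - t)))) (T / 2) (z + y * T / 2) = D2 y * ((y * (T / 2)) / (T / 2)^2)^2 + D1 y * (2 * (y * (T / 2)) / (T / 2)^3)"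
    "px (px (\<lambda>t x. U ((x - z) / (T - t)))) (T / 2) (z + y * T / 2) = D2 y / (T / 2)^2"
proof -
  show "(T / 2, z + y * T / 2) \<in> interior (Gamma T z)" by (rule interior_pt[OF T y])
  have e1: "z + y * T / 2 - z = y * (T / 2)" by simp
  have e2: "T - T / 2 = T / 2" by simp
  have hp: "0 < T / 2" using T by simp
  have e3: "y * (T / 2) / (T / 2) = y" using hp by simp
  have tx: "\<bar>z + y * T / 2 - z\<bar> < T - T / 2"
    unfolding e1 e2 using hp y by (simp add: abs_mult)
  note S = ss_derivs[OF dU dD refl tx]
  show "pt (\<lambda>t x. U ((x - z) / (T - t))) (T / 2) (z + y * T / 2) = D1 y * ((y * (T / 2)) / (T / 2)^2)"
    using S(1) unfolding e1 e2 e3 .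
  show "px (\<lambda>t x. U ((x - z) / (T - t))) (T / 2) (z + y * T / 2) = D1 y / (T / 2)"
    using S(2) unfolding e1 e2 e3 .
  show "pt (pt (\<lambda>t x. U ((x - z) / (T - t)))) (T / 2) (z + y * T / 2) = D2 y * ((y * (T / 2)) / (T / 2)^2)^2 + D1 y * (2 * (y * (T / 2)) / (T / 2)^3)"
    using S(3) unfolding e1 e2 e3 .
  show "px (px (\<lambda>t x. U ((x - z) / (T - t)))) (T / 2) (z + y * T / 2) = D2 y / (T / 2)^2"
    using S(4) unfolding e1 e2 e3 .
qed

lemma noB:
  assumes T: "0 < T" and sm: "smooth_on_interval (-1) 1 U"
    and sol: "solves_B (interior (Gamma T z)) (\<lambda>t x. U ((x - z) / (T - t)))"
  shows "\<forall>y\<in>{-1..1}. U y = U (-1)"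
proof -
  obtain D1 D2 where dU: "\<And>y. -1 < y \<Longrightarrow> y < 1 \<Longrightarrow> (U has_real_derivative D1 y) (at y)"
    and dD: "\<And>y. -1 < y \<Longrightarrow> y < 1 \<Longrightarrow> (D1 has_real_derivative D2 y) (at y)"
    and c: "(\<And>y. -1 < y \<Longrightarrow> y < 1 \<Longrightarrow> D1 y = 0) \<Longrightarrow> \<forall>y\<in>{-1..1}. U y = U (-1)"
    using setup_U[OF sm] by blast
  have ode: "(y\<^sup>2 - 1) * D2 y + 2 * y * D1 y = (y\<^sup>2 - 1) * (D1 y)\<^sup>2" if y: "-1 < y" "y < 1" for y
  proof -
    have P1: "(T / 2, z + y * T / 2) \<in> interior (Gamma T z)" by (rule interior_pt[OF T y])
    have P2: "pt (\<lambda>t x. U ((x - z) / (T - t))) (T / 2) (z + y * T / 2) = D1 y * ((y * (T / 2)) / (T / 2)^2)"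
      by (rule ss_point(2)[of U D1 D2]) (use dU dD T y in auto)
    have P3: "px (\<lambda>t x. U ((x - z) / (T - t))) (T / 2) (z + y * T / 2) = D1 y / (T / 2)"
      by (rule ss_point(3)[of U D1 D2]) (use dU dD T y in auto)
    have P4: "pt (pt (\<lambda>t x. U ((x - z) / (T - t)))) (T / 2) (z + y * T / 2) = D2 y * ((y * (T / 2)) / (T / 2)^2)^2 + D1 y * (2 * (y * (T / 2)) / (T / 2)^3)"
      by (rule ss_point(4)[of U D1 D2]) (use dU dD T y in auto)
    have P5: "px (px (\<lambda>t x. U ((x - z) / (T - t)))) (T / 2) (z + y * T / 2) = D2 y / (T / 2)^2"
      by (rule ss_point(5)[of U D1 D2]) (use dU dD T y in auto)
    have "pt (pt (\<lambda>t x. U ((x - z) / (T - t)))) (T / 2) (z + y * T / 2)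
        - px (px (\<lambda>t x. U ((x - z) / (T - t)))) (T / 2) (z + y * T / 2)
        = (pt (\<lambda>t x. U ((x - z) / (T - t))) (T / 2) (z + y * T / 2))\<^sup>2
        - (px (\<lambda>t x. U ((x - z) / (T - t))) (T / 2) (z + y * T / 2))\<^sup>2"
      using sol P1 unfolding solves_B_def by fast
    note E = this[unfolded P2 P3 P4 P5]
    from E have "D2 y * ((y * (T / 2)) / (T / 2)^2)^2 + D1 y * (2 * (y * (T / 2)) / (T / 2)^3) - D2 y / (T / 2)^2
       = (D1 y * ((y * (T / 2)) / (T / 2)^2))^2 - (D1 y / (T / 2))^2" .
    then show ?thesis by (rule algB[rotated]) (use T in auto)
  qed
  have "D1 y = 0" if y: "-1 < y" "y < 1" for y
  proof (rule finish[where G=artanh and g="\<lambda>y. 1 / (1 - y\<^sup>2)", OF _ _ surjB y])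
    fix y :: real assume y: "-1 < y" "y < 1"
    have nz: "1 - y\<^sup>2 \<noteq> 0" using y by (simp add: abs_square_eq_1)
    have "((\<lambda>y. (y\<^sup>2 - 1) * D1 y) has_real_derivative 2 * y * D1 y + (y\<^sup>2 - 1) * D2 y) (at y)"
      by (rule DERIV_cong[OF DERIV_mult[OF _ dD[OF y]]]) (auto intro!: derivative_eq_intros)
    moreover have "2 * y * D1 y + (y\<^sup>2 - 1) * D2 y = - ((y\<^sup>2 - 1) * D1 y)\<^sup>2 * (1 / (1 - y\<^sup>2))"
    proof -
      have "- ((y\<^sup>2 - 1) * D1 y)\<^sup>2 * (1 / (1 - y\<^sup>2)) = (y\<^sup>2 - 1) * (D1 y)\<^sup>2"
        using nz by (simp add: field_simps power2_eq_square)
      then show ?thesis using ode[OF y] by simp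
    qed
    ultimately show "((\<lambda>y. (y\<^sup>2 - 1) * D1 y) has_real_derivative - ((y\<^sup>2 - 1) * D1 y)\<^sup>2 * (1 / (1 - y\<^sup>2))) (at y)"
      by simp
    show "(artanh has_real_derivative 1 / (1 - y\<^sup>2)) (at y)"
      using y by (intro artanh_real_has_field_derivative) auto
  qed
  then show ?thesis using c by blast
qed

lemma algGA: "(r::real) \<noteq> 0 \<Longrightarrow>
  1 / r / 2 - (1 * (2 * r) - y * (2 * (0 - real 2 * (1 * y ^ (2 - Suc 0))))) / (2 * r * (2 * r)) = - y\<^sup>2 / r\<^sup>2"
  by (simp add: field_simps power2_eq_square)

lemma GA_deriv: "-1 < y \<Longrightarrow> y < 1 \<Longrightarrow> (GA has_real_derivative - y\<^sup>2 / (1 - y\<^sup>2)\<^sup>2) (at y)"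
proof -
  assume y: "-1 < y" "y < 1"
  have nz: "1 - y\<^sup>2 \<noteq> 0" using y by (simp add: abs_square_eq_1)
  have ay: "\<bar>y\<bar> < 1" using y by auto
  have nz2: "2 * (1 - y\<^sup>2) \<noteq> 0" using nz by simp
  have "GA = (\<lambda>y. artanh y / 2 - y / (2 * (1 - y\<^sup>2)))" unfolding GA_def by auto
  moreover have "((\<lambda>y. artanh y / 2 - y / (2 * (1 - y\<^sup>2))) has_real_derivative - y\<^sup>2 / (1 - y\<^sup>2)\<^sup>2) (at y)"
    by (rule DERIV_cong[OF DERIV_diff[OF DERIV_cdivide[OF artanh_real_has_field_derivative[OF ay]]
           DERIV_divide[OF DERIV_ident DERIV_cmult[OF DERIV_diff[OF DERIV_const DERIV_power[OF DERIV_ident]]] nz2]]])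
       (rule algGA[OF nz])
  ultimately show ?thesis by simp
qed

lemma algA2: "(r::real) \<noteq> 0 \<Longrightarrow> - (- r * d)\<^sup>2 * (- w / r\<^sup>2) = w * d\<^sup>2"
  by (simp add: field_simps power2_eq_square)

lemma noA:
  assumes T: "0 < T" and sm: "smooth_on_interval (-1) 1 U"
    and sol: "solves_A (interior (Gamma T z)) (\<lambda>t x. U ((x - z) / (T - t)))"
  shows "\<forall>y\<in>{-1..1}. U y = U (-1)"
proof -
  obtain D1 D2 where dU: "\<And>y. -1 < y \<Longrightarrow> y < 1 \<Longrightarrow> (U has_real_derivative D1 y) (at y)"
    and dD: "\<And>y. -1 < y \<Longrightarrow> y < 1 \<Longrightarrow> (D1 has_real_derivative D2 y) (at y)"
    and c: "(\<And>y. -1 < y \<Longrightarrow> y < 1 \<Longrightarrow> D1 y = 0) \<Longrightarrow> \<forall>y\<in>{-1..1}. U y = U (-1)"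
    using setup_U[OF sm] by blast
  have ode: "(y\<^sup>2 - 1) * D2 y + 2 * y * D1 y = y\<^sup>2 * (D1 y)\<^sup>2" if y: "-1 < y" "y < 1" for y
  proof -
    have P1: "(T / 2, z + y * T / 2) \<in> interior (Gamma T z)" by (rule interior_pt[OF T y])
    have P2: "pt (\<lambda>t x. U ((x - z) / (T - t))) (T / 2) (z + y * T / 2) = D1 y * ((y * (T / 2)) / (T / 2)^2)"
      by (rule ss_point(2)[of U D1 D2]) (use dU dD T y in auto)
    have P3: "px (\<lambda>t x. U ((x - z) / (T - t))) (T / 2) (z + y * T / 2) = D1 y / (T / 2)"
      by (rule ss_point(3)[of U D1 D2]) (use dU dD T y in auto)
    have P4: "pt (pt (\<lambda>t x. U ((x - z) / (T - t)))) (T / 2) (z + y * T / 2) = D2 y * ((y * (T / 2)) / (T / 2)^2)^2 + D1 y * (2 * (y * (T / 2)) / (T / 2)^3)"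
      by (rule ss_point(4)[of U D1 D2]) (use dU dD T y in auto)
    have P5: "px (px (\<lambda>t x. U ((x - z) / (T - t)))) (T / 2) (z + y * T / 2) = D2 y / (T / 2)^2"
      by (rule ss_point(5)[of U D1 D2]) (use dU dD T y in auto)
    have "pt (pt (\<lambda>t x. U ((x - z) / (T - t)))) (T / 2) (z + y * T / 2)
        - px (px (\<lambda>t x. U ((x - z) / (T - t)))) (T / 2) (z + y * T / 2)
        = (pt (\<lambda>t x. U ((x - z) / (T - t))) (T / 2) (z + y * T / 2))\<^sup>2"
      using sol P1 unfolding solves_A_def by fast
    note E = this[unfolded P2 P3 P4 P5]
    from E have "D2 y * ((y * (T / 2)) / (T / 2)^2)^2 + D1 y * (2 * (y * (T / 2)) / (T / 2)^3) - D2 y / (T / 2)^2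
       = (D1 y * ((y * (T / 2)) / (T / 2)^2))^2" .
    then show ?thesis by (rule algA[rotated]) (use T in auto)
  qed
  have "D1 y = 0" if y: "-1 < y" "y < 1" for y
  proof (rule finish[where G=GA and g="\<lambda>y. - y\<^sup>2 / (1 - y\<^sup>2)\<^sup>2", OF _ _ surjA y])
    fix y :: real assume y: "-1 < y" "y < 1"
    have nz: "1 - y\<^sup>2 \<noteq> 0" using y by (simp add: abs_square_eq_1)
    have "((\<lambda>y. (y\<^sup>2 - 1) * D1 y) has_real_derivative 2 * y * D1 y + (y\<^sup>2 - 1) * D2 y) (at y)"
      by (rule DERIV_cong[OF DERIV_mult[OF _ dD[OF y]]]) (auto intro!: derivative_eq_intros)
    moreover have "2 * y * D1 y + (y\<^sup>2 - 1) * D2 y = - ((y\<^sup>2 - 1) * D1 y)\<^sup>2 * (- y\<^sup>2 / (1 - y\<^sup>2)\<^sup>2)"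
    proof -
      have m: "y\<^sup>2 - 1 = - (1 - y\<^sup>2)" by simp
      have "- ((y\<^sup>2 - 1) * D1 y)\<^sup>2 * (- y\<^sup>2 / (1 - y\<^sup>2)\<^sup>2) = y\<^sup>2 * (D1 y)\<^sup>2"
        unfolding m by (rule algA2[OF nz])
      then show ?thesis using ode[OF y] by simp
    qed
    ultimately show "((\<lambda>y. (y\<^sup>2 - 1) * D1 y) has_real_derivative - ((y\<^sup>2 - 1) * D1 y)\<^sup>2 * (- y\<^sup>2 / (1 - y\<^sup>2)\<^sup>2)) (at y)"
      by simp
    show "(GA has_real_derivative - y\<^sup>2 / (1 - y\<^sup>2)\<^sup>2) (at y)"
      using y by (rule GA_deriv)
  qed
  then show ?thesis using c by blast
qed

lemma ybound:
  assumes "(t, x) \<in> Gamma T x0"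
  shows "t < T" "-1 \<le> (x - x0) / (T - t)" "(x - x0) / (T - t) \<le> 1"
proof -
  have a: "0 \<le> t" "t < T" "\<bar>x - x0\<bar> \<le> T - t" using assms unfolding Gamma_def by auto
  show "t < T" using a by simp
  have h: "0 < T - t" using a by simp
  have b: "-(T - t) \<le> x - x0" "x - x0 \<le> T - t" using a by linarith+
  show "-1 \<le> (x - x0) / (T - t)" "(x - x0) / (T - t) \<le> 1"
    using b h by (simp_all add: pos_divide_le_eq pos_le_divide_eq)
qed

lemma partA_full:
  fixes \<alpha> \<kappa> T x0 :: real
  assumes a: "0 < \<alpha>" "\<alpha> \<le> 1" "0 < T" and U: "U \<in> {U_A0 \<alpha>, U_Ainf \<alpha>}"
  shows "(\<forall>(t, x)\<in>Gamma T x0. 1 - t / T > 0 \<and>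
              1 - sqrt (1 - \<alpha>) * ((x - x0) / (T - t)) > 0 \<and>
              1 + sqrt (1 - \<alpha>) * ((x - x0) / (T - t)) > 0) \<and>
         (\<exists>N. open N \<and> Gamma T x0 \<subseteq> N \<and>
              smooth2_on N (gss \<alpha> U \<kappa> T x0) \<and> solves_A N (gss \<alpha> U \<kappa> T x0)) \<and>
         filterlim (\<lambda>t. gss \<alpha> U \<kappa> T x0 t x0) at_top (at_left T)"
proof (intro conjI)
  define s where "s = sqrt (1 - \<alpha>)"
  have s0: "0 \<le> s" unfolding s_def using a by simp
  have s1: "s < 1" unfolding s_def using a by (simp add: real_sqrt_less_iff)
  have s2: "s\<^sup>2 = 1 - \<alpha>" unfolding s_def using a by simp
  show "\<forall>(t, x)\<in>Gamma T x0. 1 - t / T > 0 \<and>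
              1 - sqrt (1 - \<alpha>) * ((x - x0) / (T - t)) > 0 \<and>
              1 + sqrt (1 - \<alpha>) * ((x - x0) / (T - t)) > 0"
  proof (intro ballI, clarify)
    fix t x assume g: "(t, x) \<in> Gamma T x0"
    note yb = ybound[OF g]
    define y where "y = (x - x0) / (T - t)"
    have "s * y \<le> s * 1" using yb s0 unfolding y_def by (intro mult_left_mono) auto
    moreover have "s * (-1) \<le> s * y" using yb s0 unfolding y_def by (intro mult_left_mono) auto
    ultimately have p2: "1 - s * y > 0" "1 + s * y > 0" using s1 by linarith+
    have p1: "1 - t / T > 0" using yb(1) a(3) by (simp add: field_simps)
    show "1 - t / T > 0 \<and> 1 - sqrt (1 - \<alpha>) * ((x - x0) / (T - t)) > 0 \<and>
              1 + sqrt (1 - \<alpha>) * ((x - x0) / (T - t)) > 0"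
      using p1 p2 unfolding y_def s_def by simp
  qed
  have "\<exists>c. c\<^sup>2 = 1 - \<alpha> \<and> U = (\<lambda>y. - \<alpha> * ln (1 - c * y))"
  proof (cases "U = U_A0 \<alpha>")
    case True then show ?thesis using s2 by (intro exI[of _ s]) (auto simp: U_A0_def s_def fun_eq_iff)
  next
    case False then have "U = U_Ainf \<alpha>" using U by auto
    then show ?thesis using s2 by (intro exI[of _ "- s"]) (auto simp: U_Ainf_def s_def fun_eq_iff)
  qed
  then obtain c where c: "c\<^sup>2 = 1 - \<alpha>" "U = (\<lambda>y. - \<alpha> * ln (1 - c * y))" by blast
  show "\<exists>N. open N \<and> Gamma T x0 \<subseteq> N \<and>
              smooth2_on N (gss \<alpha> U \<kappa> T x0) \<and> solves_A N (gss \<alpha> U \<kappa> T x0)"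
    by (rule partA[OF a c])
  have "(\<lambda>t. gss \<alpha> U \<kappa> T x0 t x0) = (\<lambda>t. - \<alpha> * ln (1 - t / T) + \<kappa>)"
    unfolding gss_def c(2) by simp
  then show "filterlim (\<lambda>t. gss \<alpha> U \<kappa> T x0 t x0) at_top (at_left T)"
    using blowup_lim[OF a(1) a(3)] by simp
qed

lemma partB_full:
  fixes \<beta> \<kappa> T x0 :: real and \<alpha> :: nat
  assumes a: "1 \<le> \<alpha>" "0 < \<beta>" "0 < T"
  shows "(\<forall>(t, x)\<in>Gamma T x0. 1 - t / T > 0 \<and>
           (1 + (x - x0) / (T - t)) ^ \<alpha> + \<beta> * (1 - (x - x0) / (T - t)) ^ \<alpha> > 0) \<and>
      (\<exists>N. open N \<and> Gamma T x0 \<subseteq> N \<and>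
           smooth2_on N (gss (real \<alpha>) (U_B \<alpha> \<beta>) \<kappa> T x0) \<and>
           solves_B N (gss (real \<alpha>) (U_B \<alpha> \<beta>) \<kappa> T x0)) \<and>
      filterlim (\<lambda>t. gss (real \<alpha>) (U_B \<alpha> \<beta>) \<kappa> T x0 t x0) at_top (at_left T)"
proof (intro conjI)
  show "\<forall>(t, x)\<in>Gamma T x0. 1 - t / T > 0 \<and>
           (1 + (x - x0) / (T - t)) ^ \<alpha> + \<beta> * (1 - (x - x0) / (T - t)) ^ \<alpha> > 0"
  proof (intro ballI, clarify)
    fix t x assume g: "(t, x) \<in> Gamma T x0"
    note yb = ybound[OF g]
    define y where "y = (x - x0) / (T - t)"
    have y: "-1 \<le> y" "y \<le> 1" using yb unfolding y_def by auto
    have "0 < (1 + y) ^ \<alpha> + \<beta> * (1 - y) ^ \<alpha>"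
    proof (cases "y = -1")
      case True then show ?thesis using a by (simp add: power_0_left)
    next
      case False then have "0 < 1 + y" using y by simp
      then show ?thesis using a y by (intro add_pos_nonneg) auto
    qed
    then show "1 - t / T > 0 \<and> (1 + (x - x0) / (T - t)) ^ \<alpha> + \<beta> * (1 - (x - x0) / (T - t)) ^ \<alpha> > 0"
    proof -
      have p1: "1 - t / T > 0" using yb(1) a(3) by (simp add: field_simps)
      show ?thesis using p1 \<open>0 < (1 + y) ^ \<alpha> + \<beta> * (1 - y) ^ \<alpha>\<close> unfolding y_def by blast
    qed
  qed
  show "\<exists>N. open N \<and> Gamma T x0 \<subseteq> N \<and>
           smooth2_on N (gss (real \<alpha>) (U_B \<alpha> \<beta>) \<kappa> T x0) \<and>
           solves_B N (gss (real \<alpha>) (U_B \<alpha> \<beta>) \<kappa> T x0)"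
    by (rule partB[OF a])
  have "(\<lambda>t. gss (real \<alpha>) (U_B \<alpha> \<beta>) \<kappa> T x0 t x0) = (\<lambda>t. - real \<alpha> * ln (1 - t / T) + \<kappa>)"
    unfolding gss_def U_B_def by simp
  moreover have "0 < real \<alpha>" using a by simp
  ultimately show "filterlim (\<lambda>t. gss (real \<alpha>) (U_B \<alpha> \<beta>) \<kappa> T x0 t x0) at_top (at_left T)"
    using blowup_lim[of "real \<alpha>" T \<kappa>] a by simp
qed

theorem theorem1p1:
  shows
  "(\<forall>T x0. T > 0 \<longrightarrow>
      \<not> (\<exists>U. smooth_on_interval (-1) 1 U \<and> (\<exists>y1\<in>{-1..1}. \<exists>y2\<in>{-1..1}. U y1 \<noteq> U y2) \<and>
             solves_A (interior (Gamma T x0)) (\<lambda>t x. U ((x - x0) / (T - t)))) \<and>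
      \<not> (\<exists>U. smooth_on_interval (-1) 1 U \<and> (\<exists>y1\<in>{-1..1}. \<exists>y2\<in>{-1..1}. U y1 \<noteq> U y2) \<and>
             solves_B (interior (Gamma T x0)) (\<lambda>t x. U ((x - x0) / (T - t)))))
   \<and>
   (\<forall>(\<alpha>::real) \<kappa> T x0. 0 < \<alpha> \<and> \<alpha> \<le> 1 \<and> T > 0 \<longrightarrow>
      (\<forall>U\<in>{U_A0 \<alpha>, U_Ainf \<alpha>}.
         (\<forall>(t, x)\<in>Gamma T x0. 1 - t / T > 0 \<and>
              1 - sqrt (1 - \<alpha>) * ((x - x0) / (T - t)) > 0 \<and>
              1 + sqrt (1 - \<alpha>) * ((x - x0) / (T - t)) > 0) \<and>
         (\<exists>N. open N \<and> Gamma T x0 \<subseteq> N \<and>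
              smooth2_on N (gss \<alpha> U \<kappa> T x0) \<and> solves_A N (gss \<alpha> U \<kappa> T x0)) \<and>
         filterlim (\<lambda>t. gss \<alpha> U \<kappa> T x0 t x0) at_top (at_left T)))
   \<and>
   (\<forall>(\<alpha>::nat) (\<beta>::real) \<kappa> T x0. 1 \<le> \<alpha> \<and> 0 < \<beta> \<and> T > 0 \<longrightarrow>
      (\<forall>(t, x)\<in>Gamma T x0. 1 - t / T > 0 \<and>
           (1 + (x - x0) / (T - t)) ^ \<alpha> + \<beta> * (1 - (x - x0) / (T - t)) ^ \<alpha> > 0) \<and>
      (\<exists>N. open N \<and> Gamma T x0 \<subseteq> N \<and>
           smooth2_on N (gss (real \<alpha>) (U_B \<alpha> \<beta>) \<kappa> T x0) \<and>
           solves_B N (gss (real \<alpha>) (U_B \<alpha> \<beta>) \<kappa> T x0)) \<and>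
      filterlim (\<lambda>t. gss (real \<alpha>) (U_B \<alpha> \<beta>) \<kappa> T x0 t x0) at_top (at_left T))"
proof -
  have A: "\<not> (\<exists>U. smooth_on_interval (-1) 1 U \<and> (\<exists>y1\<in>{-1..1}. \<exists>y2\<in>{-1..1}. U y1 \<noteq> U y2) \<and>
             solves_A (interior (Gamma T x0)) (\<lambda>t x. U ((x - x0) / (T - t))))" if T: "T > 0" for T x0 :: real
  proof
    assume "\<exists>U. smooth_on_interval (-1) 1 U \<and> (\<exists>y1\<in>{-1..1}. \<exists>y2\<in>{-1..1}. U y1 \<noteq> U y2) \<and>
             solves_A (interior (Gamma T x0)) (\<lambda>t x. U ((x - x0) / (T - t)))"
    then obtain U y1 y2 where U: "smooth_on_interval (-1) 1 U" "y1 \<in> {-1..1}" "y2 \<in> {-1..1}" "U y1 \<noteq> U y2"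
      "solves_A (interior (Gamma T x0)) (\<lambda>t x. U ((x - x0) / (T - t)))" by blast
    have c: "\<forall>y\<in>{-1..1}. U y = U (-1)" by (rule noA[where T=T and U=U and z=x0, OF T U(1) U(5)])
    then have "U y1 = U (-1)" "U y2 = U (-1)" using U(2,3) by blast+
    then show False using U(4) by simp
  qed
  have B: "\<not> (\<exists>U. smooth_on_interval (-1) 1 U \<and> (\<exists>y1\<in>{-1..1}. \<exists>y2\<in>{-1..1}. U y1 \<noteq> U y2) \<and>
             solves_B (interior (Gamma T x0)) (\<lambda>t x. U ((x - x0) / (T - t))))" if T: "T > 0" for T x0 :: real
  proof
    assume "\<exists>U. smooth_on_interval (-1) 1 U \<and> (\<exists>y1\<in>{-1..1}. \<exists>y2\<in>{-1..1}. U y1 \<noteq> U y2) \<and>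
             solves_B (interior (Gamma T x0)) (\<lambda>t x. U ((x - x0) / (T - t)))"
    then obtain U y1 y2 where U: "smooth_on_interval (-1) 1 U" "y1 \<in> {-1..1}" "y2 \<in> {-1..1}" "U y1 \<noteq> U y2"
      "solves_B (interior (Gamma T x0)) (\<lambda>t x. U ((x - x0) / (T - t)))" by blast
    have c: "\<forall>y\<in>{-1..1}. U y = U (-1)" by (rule noB[where T=T and U=U and z=x0, OF T U(1) U(5)])
    then have "U y1 = U (-1)" "U y2 = U (-1)" using U(2,3) by blast+
    then show False using U(4) by simp
  qed
  show ?thesis
    apply (intro conjI)
    subgoal by (intro allI impI conjI; erule A B)
    subgoal by (intro allI impI ballI partA_full) auto
    subgoal by (intro allI impI partB_full) auto
    done
qed

end
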